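(* Let $(\gamma_{n})_{n\in\mathbb{N}}$ be nonnegative integrable functions on $[0,\infty)$ with $\rho:=\sup_{n\in\mathbb{N}}\int_{0}^{\infty}\gamma_{n}(t)dt<1$, and let $a(t)>0$ satisfy $a(t)/t\to0$ as $t\to\infty$. For $M\in\mathbb{N}$, $\theta\in\mathbb{R}$ and $t\ge0$ define $G_{M}(t,\theta,M)=\theta$ and recursively, for $0\le n\le M-1$, $$G_{n}(t,\theta,M)=\theta+\int_{0}^{t}\left(e^{G_{n+1}(t-s,\theta,M)}-1\right)\gamma_{n}(s)\,ds.$$ Then for any fixed $\theta\in\mathbb{R}$ there is some $k_{1}\ge\frac{1}{1-\rho}$ such that for all sufficiently large $t$, $$\left|G_{n}\left(s,\tfrac{a(t)}{t}\theta,M\right)\right|\le k_{1}\frac{a(t)}{t}|\theta|$$ uniformly for $1\le n\le M$, $M\in\mathbb{N}$ and $s\ge0$. *)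

theory Defs
  imports "HOL-Analysis.Analysis"
begin

text \<open>Grec gamma M k t theta is G_{M-k}(t,theta,M): recursion on the distance k = M - n.\<close>
fun Grec :: "(nat \<Rightarrow> real \<Rightarrow> real) \<Rightarrow> nat \<Rightarrow> nat \<Rightarrow> real \<Rightarrow> real \<Rightarrow> real" where
  "Grec \<gamma> M 0 t \<theta> = \<theta>"
| "Grec \<gamma> M (Suc k) t \<theta> =
     \<theta> + (LINT s:{0..t}|lborel. (exp (Grec \<gamma> M k (t - s) \<theta>) - 1) * \<gamma> (M - Suc k) s)"

text \<open>G gamma n t theta M = G_n(t, theta, M), meaningful for n \<le> M.\<close>
definition G :: "(nat \<Rightarrow> real \<Rightarrow> real) \<Rightarrow> nat \<Rightarrow> real \<Rightarrow> real \<Rightarrow> nat \<Rightarrow> real" where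
  "G \<gamma> n t \<theta> M = Grec \<gamma> M (M - n) t \<theta>"

end

theory Submission
  imports Defs
begin

lemma exp_m1_abs: "\<bar>exp (g::real) - 1\<bar> \<le> exp \<bar>g\<bar> - 1"
proof (cases "g \<ge> 0")
  case True then show ?thesis by simp
next
  case False
  have h1: "1 + g \<le> exp g" by (rule exp_ge_add_one_self)
  have h2: "1 + (-g) \<le> exp (-g)" by (rule exp_ge_add_one_self)
  have "exp g \<le> 1" using False by simp
  then have "\<bar>exp g - 1\<bar> = 1 - exp g" by simp
  moreover have "\<bar>g\<bar> = -g" using False by simp
  ultimately show ?thesis using h1 h2 by linarith
qed

lemma exp_m1_le: "(B::real) \<ge> 0 \<Longrightarrow> exp B - 1 \<le> B * exp B"
proof -
  assume "B \<ge> 0"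
  have "1 + (-B) \<le> exp (-B)" by (rule exp_ge_add_one_self)
  hence "(1 - B) * exp B \<le> exp (-B) * exp B" by (simp add: mult_right_mono)
  also have "\<dots> = 1" by (simp add: exp_add[symmetric])
  finally show ?thesis by (simp add: algebra_simps)
qed

lemma integral_step:
  fixes \<gamma> :: "real \<Rightarrow> real" and h :: "real \<Rightarrow> real"
  assumes nonneg: "\<And>t. t \<ge> 0 \<Longrightarrow> \<gamma> t \<ge> 0"
    and integ: "set_integrable lborel {0..} \<gamma>"
    and le: "(LINT t:{0..}|lborel. \<gamma> t) \<le> \<rho>"
    and hb: "\<And>s. s \<in> {0..t} \<Longrightarrow> \<bar>h s\<bar> \<le> C"
    and C: "C \<ge> 0"
  shows "\<bar>LINT s:{0..t}|lborel. h s * \<gamma> s\<bar> \<le> C * \<rho>"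
proof -
  have i0: "integrable lborel (\<lambda>x. indicator {0..} x * \<gamma> x)"
    using integ unfolding set_integrable_def by simp
  have it: "integrable lborel (\<lambda>x. indicator {0..t} x * \<gamma> x)"
    using set_integrable_subset[OF integ, of "{0..t}"] unfolding set_integrable_def by auto
  have r0: "0 \<le> \<rho>"
  proof -
    have "0 \<le> (LINT t:{0..}|lborel. \<gamma> t)"
      unfolding set_lebesgue_integral_def
      by (rule integral_nonneg_AE) (auto simp: nonneg indicator_def)
    with le show ?thesis by simp
  qed
  show ?thesis
  proof (cases "set_integrable lborel {0..t} (\<lambda>s. h s * \<gamma> s)")
    case False
    then have "(LINT s:{0..t}|lborel. h s * \<gamma> s) = 0"
      unfolding set_integrable_def set_lebesgue_integral_def
      by (simp add: not_integrable_integral_eq)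
    then show ?thesis using r0 C by simp
  next
    case True
    then have ih: "integrable lborel (\<lambda>x. indicator {0..t} x * (h x * \<gamma> x))"
      unfolding set_integrable_def by simp
    have "\<bar>LINT s:{0..t}|lborel. h s * \<gamma> s\<bar>
        = \<bar>integral\<^sup>L lborel (\<lambda>x. indicator {0..t} x * (h x * \<gamma> x))\<bar>"
      unfolding set_lebesgue_integral_def by simp
    also have "\<dots> \<le> integral\<^sup>L lborel (\<lambda>x. \<bar>indicator {0..t} x * (h x * \<gamma> x)\<bar>)"
      by (rule integral_abs_bound)
    also have "\<dots> \<le> integral\<^sup>L lborel (\<lambda>x. C * (indicator {0..t} x * \<gamma> x))"
    proof (rule integral_mono)
      show "integrable lborel (\<lambda>x. \<bar>indicator {0..t} x * (h x * \<gamma> x)\<bar>)"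
        using ih by (rule integrable_abs)
      show "integrable lborel (\<lambda>x. C * (indicator {0..t} x * \<gamma> x))"
        using it by simp
      fix x
      show "\<bar>indicator {0..t} x * (h x * \<gamma> x)\<bar> \<le> C * (indicator {0..t} x * \<gamma> x)"
      proof (cases "x \<in> {0..t}")
        case True
        then have "\<gamma> x \<ge> 0" using nonneg by auto
        then show ?thesis using True hb[OF True]
          by (simp add: abs_mult mult_right_mono)
      qed simp
    qed
    also have "\<dots> = C * integral\<^sup>L lborel (\<lambda>x. indicator {0..t} x * \<gamma> x)" by simp
    also have "\<dots> \<le> C * integral\<^sup>L lborel (\<lambda>x. indicator {0..} x * \<gamma> x)"
    proof (rule mult_left_mono[OF _ C], rule integral_mono[OF it i0])
      fix x show "indicator {0..t} x * \<gamma> x \<le> indicator {0..} x * \<gamma> x"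
        using nonneg[of x] by (auto simp: indicator_def)
    qed
    also have "\<dots> \<le> C * \<rho>"
      using le C unfolding set_lebesgue_integral_def by (simp add: mult_left_mono)
    finally show ?thesis .
  qed
qed

lemma Grec_bound:
  fixes \<gamma> :: "nat \<Rightarrow> real \<Rightarrow> real"
  assumes nonneg: "\<And>n t. t \<ge> 0 \<Longrightarrow> \<gamma> n t \<ge> 0"
    and integ: "\<And>n. set_integrable lborel {0..} (\<gamma> n)"
    and le: "\<And>n. (LINT t:{0..}|lborel. \<gamma> n t) \<le> \<rho>"
    and B: "B \<ge> 0" "\<bar>x\<bar> + (exp B - 1) * \<rho> \<le> B"
  shows "t \<ge> 0 \<Longrightarrow> \<bar>Grec \<gamma> M k t x\<bar> \<le> B"
proof (induction k arbitrary: t)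
  case 0
  have "0 \<le> (LINT t:{0..}|lborel. \<gamma> 0 t)"
    unfolding set_lebesgue_integral_def
    by (rule integral_nonneg_AE) (auto simp: nonneg indicator_def)
  with le[of 0] have "\<rho> \<ge> 0" by simp
  moreover have "exp B - 1 \<ge> 0" using B by simp
  ultimately have "(exp B - 1) * \<rho> \<ge> 0" by simp
  then show ?case using B by simp
next
  case (Suc k)
  have "\<bar>LINT s:{0..t}|lborel. (exp (Grec \<gamma> M k (t - s) x) - 1) * \<gamma> (M - Suc k) s\<bar>
        \<le> (exp B - 1) * \<rho>"
  proof (rule integral_step[OF nonneg integ le])
    fix s assume s: "s \<in> {0..t}"
    then have "\<bar>Grec \<gamma> M k (t - s) x\<bar> \<le> B" using Suc.IH by auto
    then show "\<bar>exp (Grec \<gamma> M k (t - s) x) - 1\<bar> \<le> exp B - 1"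
      using exp_m1_abs[of "Grec \<gamma> M k (t - s) x"] by (meson diff_right_mono exp_le_cancel_iff order_trans)
  next
    show "0 \<le> exp B - 1" using B(1) by simp
  qed
  then show ?case using B by simp
qed

theorem lemma4p7:
  fixes \<gamma> :: "nat \<Rightarrow> real \<Rightarrow> real" and a :: "real \<Rightarrow> real" and \<rho> \<theta> :: real
  assumes nonneg: "\<And>n t. t \<ge> 0 \<Longrightarrow> \<gamma> n t \<ge> 0"
    and integ: "\<And>n. set_integrable lborel {0..} (\<gamma> n)"
    and bdd: "bdd_above (range (\<lambda>n. LINT t:{0..}|lborel. \<gamma> n t))"
    and rho_def: "\<rho> = (SUP n. LINT t:{0..}|lborel. \<gamma> n t)"
    and rho_lt: "\<rho> < 1"
    and a_pos: "\<And>t. a t > 0"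
    and a_lim: "((\<lambda>t. a t / t) \<longlongrightarrow> 0) at_top"
  shows "\<exists>k1 \<ge> 1 / (1 - \<rho>). \<forall>\<^sub>F t in at_top. \<forall>M n s.
           1 \<le> n \<longrightarrow> n \<le> M \<longrightarrow> s \<ge> 0 \<longrightarrow>
           \<bar>G \<gamma> n s (a t / t * \<theta>) M\<bar> \<le> k1 * (a t / t) * \<bar>\<theta>\<bar>"
proof -
  define k1 where "k1 = 2 / (1 - \<rho>)"
  have le: "\<And>n. (LINT t:{0..}|lborel. \<gamma> n t) \<le> \<rho>"
    unfolding rho_def by (rule cSUP_upper[OF _ bdd]) simp
  have k1pos: "k1 > 0" using rho_lt unfolding k1_def by simp
  have k1ge: "k1 \<ge> 1 / (1 - \<rho>)" using rho_lt unfolding k1_def by (simp add: divide_right_mono)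
  have lim: "((\<lambda>t. \<rho> * exp (k1 * \<bar>a t / t * \<theta>\<bar>)) \<longlongrightarrow> \<rho> * exp (k1 * \<bar>0 * \<theta>\<bar>)) at_top"
    by (intro tendsto_intros a_lim)
  have "\<rho> < (1 + \<rho>) / 2" using rho_lt by simp
  then have ev1: "\<forall>\<^sub>F t in at_top. \<rho> * exp (k1 * \<bar>a t / t * \<theta>\<bar>) < (1 + \<rho>) / 2"
    using order_tendstoD(2)[OF lim, of "(1 + \<rho>) / 2"] by simp
  have ev2: "\<forall>\<^sub>F t in at_top. (t::real) > 0" by (rule eventually_gt_at_top)
  have "\<forall>\<^sub>F t in at_top. \<forall>M n s.
           1 \<le> n \<longrightarrow> n \<le> M \<longrightarrow> s \<ge> 0 \<longrightarrow>
           \<bar>G \<gamma> n s (a t / t * \<theta>) M\<bar> \<le> k1 * (a t / t) * \<bar>\<theta>\<bar>"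
    using ev1 ev2
  proof eventually_elim
    case (elim t)
    define x where "x = a t / t * \<theta>"
    define B where "B = k1 * \<bar>x\<bar>"
    have B0: "B \<ge> 0" unfolding B_def using k1pos by simp
    have "(exp B - 1) * \<rho> \<le> B * exp B * \<rho>"
      using exp_m1_le[OF B0] le[of 0] 
      proof -
        have "0 \<le> (LINT t:{0..}|lborel. \<gamma> 0 t)"
          unfolding set_lebesgue_integral_def
          by (rule integral_nonneg_AE) (auto simp: nonneg indicator_def)
        with le[of 0] have "\<rho> \<ge> 0" by simp
        then show ?thesis using exp_m1_le[OF B0] by (simp add: mult_right_mono)
      qed
    also have "\<dots> = B * (\<rho> * exp B)" by simp
    also have "\<dots> \<le> B * ((1 + \<rho>) / 2)"
      using elim(1) B0 unfolding B_def x_def by (intro mult_left_mono) auto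
    finally have "\<bar>x\<bar> + (exp B - 1) * \<rho> \<le> \<bar>x\<bar> + B * ((1 + \<rho>) / 2)" by simp
    also have "\<dots> = B"
      unfolding B_def k1_def using rho_lt by (simp add: field_simps)
    finally have key: "\<bar>x\<bar> + (exp B - 1) * \<rho> \<le> B" .
    have eqB: "B = k1 * (a t / t) * \<bar>\<theta>\<bar>"
      unfolding B_def x_def using elim(2) a_pos[of t] by (simp add: abs_mult)
    show ?case
      using Grec_bound[where \<gamma>=\<gamma> and x=x and B=B, OF nonneg integ le B0 key] unfolding G_def eqB[symmetric] x_def
      by blast
  qed
  then show ?thesis using k1ge by blast
qed

end
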